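(* Let $p, \sigma \in \mathbb{R}$. The equation \[ -u''(x) = x^\sigma u(x)^p \quad \text{in } (0,+\infty) \] admits at least one non-trivial, non-negative solution $u \in C^2(0,+\infty)$ if and only if one of the following holds: (1) $\sigma < -2$ and $p > -1-\sigma$; or (2) $\sigma > -2$ and $p < -1-\sigma$.
   Context: Solutions are only required to be $C^2$ on the open half-line $(0,+\infty)$ and to satisfy the equation pointwise there; no continuity at $0$ is assumed. For $p=0$ the term $u^p$ is understood as $1$, and for $p<0$ it is required that $u>0$ on $(0,+\infty)$. *)

theory Defs
  imports "HOL-Analysis.Analysis"
begin

text \<open>Power u^p with the paper's conventions: u^0 = 1; for p \<noteq> 0 the real power
  (only used for u > 0, or u \<ge> 0 when p > 0, where 0 powr p = 0).\<close>
definition upow :: "real \<Rightarrow> real \<Rightarrow> real" where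
  "upow u p = (if p = 0 then 1 else u powr p)"

definition C2_on :: "real set \<Rightarrow> (real \<Rightarrow> real) \<Rightarrow> bool" where
  "C2_on S u \<longleftrightarrow> (\<forall>x\<in>S. u differentiable (at x)) \<and>
                   (\<forall>x\<in>S. deriv u differentiable (at x)) \<and>
                   continuous_on S (deriv (deriv u))"

definition is_solution :: "real \<Rightarrow> real \<Rightarrow> (real \<Rightarrow> real) \<Rightarrow> bool" where
  "is_solution p \<sigma> u \<longleftrightarrow>
     C2_on {0<..} u \<and>
     (\<forall>x>0. u x \<ge> 0) \<and>
     (p < 0 \<longrightarrow> (\<forall>x>0. u x > 0)) \<and>
     (\<exists>x>0. u x \<noteq> 0) \<and>
     (\<forall>x>0. - deriv (deriv u) x = x powr \<sigma> * upow (u x) p)"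

end

theory Submission
  imports Defs
begin

locale wsol =
  fixes p \<sigma> :: real and u u1 u2 :: "real \<Rightarrow> real"
  assumes d1: "\<And>x. x > 0 \<Longrightarrow> (u has_real_derivative u1 x) (at x)"
  and d2: "\<And>x. x > 0 \<Longrightarrow> (u1 has_real_derivative u2 x) (at x)"
  and eq: "\<And>x. x > 0 \<Longrightarrow> u2 x = - (x powr \<sigma> * upow (u x) p)"
  and nn: "\<And>x. x > 0 \<Longrightarrow> u x \<ge> 0"
  and nt: "\<exists>x>0. u x \<noteq> 0"
begin

lemma upow_nn: "v \<ge> 0 \<Longrightarrow> upow v q \<ge> 0"
  by (simp add: upow_def)

lemma upow_pos: "v > 0 \<Longrightarrow> upow v q > 0"
  by (simp add: upow_def)

lemma u2_nonpos: "x > 0 \<Longrightarrow> u2 x \<le> 0"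
  using eq[of x] nn[of x] upow_nn[of "u x" p] by simp

lemma u1_mono: assumes "0 < x" "x \<le> y" shows "u1 y \<le> u1 x"
  using assms by (intro DERIV_nonpos_imp_nonincreasing[of x y u1]) (auto intro!: exI[of _ "u2 _"] d2 u2_nonpos)

lemma upper: assumes "0 < x" "x \<le> y" shows "u y \<le> u x + u1 x * (y - x)"
proof -
  have "(\<lambda>t. u t - u1 x * t) y \<le> (\<lambda>t. u t - u1 x * t) x"
  proof (rule DERIV_nonpos_imp_nonincreasing[OF assms(2)])
    fix t assume t: "x \<le> t" "t \<le> y"
    show "\<exists>y. DERIV (\<lambda>t. u t - u1 x * t) t :> y \<and> y \<le> 0"
      using t assms by (intro exI[of _ "u1 t - u1 x"]) (auto intro!: derivative_eq_intros d1 u1_mono)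
  qed
  thus ?thesis by (simp add: algebra_simps)
qed

lemma lower: assumes "0 < x" "x \<le> y" shows "u y \<ge> u x + u1 y * (y - x)"
proof -
  have "(\<lambda>t. u t - u1 y * t) x \<le> (\<lambda>t. u t - u1 y * t) y"
  proof (rule DERIV_nonneg_imp_nondecreasing[OF assms(2)])
    fix t assume t: "x \<le> t" "t \<le> y"
    show "\<exists>z. DERIV (\<lambda>t. u t - u1 y * t) t :> z \<and> z \<ge> 0"
      using t assms by (intro exI[of _ "u1 t - u1 y"]) (auto intro!: derivative_eq_intros d1 u1_mono)
  qed
  thus ?thesis by (simp add: algebra_simps)
qed

lemma u1_nonneg: assumes "x > 0" shows "u1 x \<ge> 0"
proof (rule ccontr)
  assume "\<not> ?thesis"
  hence neg: "u1 x < 0" by simp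
  define y where "y = x + (u x + 1) / (- u1 x)"
  have ux: "u x \<ge> 0" using nn assms by simp
  have "(u x + 1) / (- u1 x) > 0" using neg ux by (intro divide_pos_pos) auto
  hence xy: "x \<le> y" unfolding y_def by simp
  have "u1 x * (y - x) = - (u x + 1)" unfolding y_def using neg by (simp add: field_simps)
  hence "u y \<le> -1" using upper[OF assms xy] by simp
  moreover have "u y \<ge> 0" using nn assms xy by simp
  ultimately show False by simp
qed

lemma u_mono: assumes "0 < x" "x \<le> y" shows "u x \<le> u y"
  using assms by (intro DERIV_nonneg_imp_nondecreasing[of x y u]) (auto intro!: exI[of _ "u1 _"] d1 u1_nonneg)

lemma u_pos: assumes "x > 0" shows "u x > 0"
proof (rule ccontr)
  assume "\<not> ?thesis"
  hence z: "u x = 0" using nn[OF assms] by simp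
  obtain x2 where x2: "x2 > 0" "u x2 \<noteq> 0" using nt by blast
  hence ux2: "u x2 > 0" using nn[of x2] by simp
  have xx2: "x < x2" using u_mono[of x2 x] x2 z ux2 by force
  have "u (x/2) = 0" using u_mono[of "x/2" x] nn[of "x/2"] z assms by simp
  obtain \<xi> where xi: "\<xi> > x/2" "\<xi> < x" "u x - u (x/2) = (x - x/2) * u1 \<xi>"
    using MVT2[of "x/2" x u u1] assms d1 by auto
  hence u1xi: "u1 \<xi> = 0" using z \<open>u (x/2) = 0\<close> assms by simp
  have "u x2 \<le> u x"
  proof (rule DERIV_nonpos_imp_nonincreasing[of x x2 u])
    show "x \<le> x2" using xx2 by simp
    fix t assume t: "x \<le> t" "t \<le> x2"
    show "\<exists>y. DERIV u t :> y \<and> y \<le> 0"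
      using t assms xi u1_mono[of \<xi> t] u1xi by (intro exI[of _ "u1 t"]) (auto intro!: d1)
  qed
  thus False using z ux2 by simp
qed

lemma u2_neg: "x > 0 \<Longrightarrow> u2 x < 0"
  using eq[of x] u_pos[of x] upow_pos[of "u x" p] by simp

lemma u1_strict: assumes "0 < x" "x < y" shows "u1 y < u1 x"
proof -
  obtain z where "z > x" "z < y" "u1 y - u1 x = (y - x) * u2 z"
    using MVT2[of x y u1 u2] assms d2 by auto
  moreover have "u2 z < 0" using u2_neg calculation assms by simp
  moreover have "(y - x) * u2 z < 0" using calculation assms by (intro mult_pos_neg) auto
  ultimately show ?thesis by linarith
qed

lemma u1_pos: "x > 0 \<Longrightarrow> u1 x > 0"
  using u1_strict[of x "x+1"] u1_nonneg[of "x+1"] by simp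

lemma key: assumes "x > 0" shows "x * u1 x < u x"
proof -
  have "u x \<ge> u (x/2) + u1 x * (x/2)" using lower[of "x/2" x] assms by simp
  moreover have "u (x/2) \<ge> u y + u1 (x/2) * (x/2 - y)" if "0 < y" "y \<le> x/2" for y
    using lower that by simp
  have "u (x/2) \<ge> (x/2) * u1 (x/2)"
  proof (rule ccontr)
    assume "\<not> ?thesis"
    hence a: "(x/2) * u1 (x/2) - u (x/2) > 0" by simp
    have b: "u1 (x/2) > 0" using u1_pos assms by simp
    define y where "y = min (x/2) (((x/2) * u1 (x/2) - u (x/2)) / (2 * u1 (x/2)))"
    have y: "0 < y" "y \<le> x/2" using a b assms unfolding y_def by auto
    have "y * u1 (x/2) \<le> ((x/2) * u1 (x/2) - u (x/2)) / 2"
    proof -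
      have "y \<le> ((x/2) * u1 (x/2) - u (x/2)) / (2 * u1 (x/2))" unfolding y_def by simp
      hence "y * (2 * u1 (x/2)) \<le> ((x/2) * u1 (x/2) - u (x/2))"
        using b by (simp add: pos_le_divide_eq)
      thus ?thesis by simp
    qed
    moreover have "u (x/2) \<ge> u y + u1 (x/2) * (x/2 - y)" using lower y by simp
    moreover have "u y > 0" using u_pos y by simp
    ultimately show False using a by (simp add: algebra_simps)
  qed
  moreover have "x * u1 x < x * u1 (x/2)" using u1_strict[of "x/2" x] assms by (intro mult_strict_left_mono) auto
  ultimately have "u x \<ge> u (x/2) + (x * u1 x)/2" "u (x/2) \<ge> (x * u1 (x/2))/2" "x * u1 x < x * u1 (x/2)"
    by (simp_all add: algebra_simps)
  thus ?thesis by linarith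
qed

lemma DIV: assumes c: "c > 0" and x0: "x0 > 0" and h: "\<And>x. x \<ge> x0 \<Longrightarrow> c / x \<le> x powr \<sigma> * upow (u x) p"
  shows False
proof -
  define y where "y = max x0 (exp ((u1 x0 + c * ln x0) / c + 1))"
  have xy: "x0 \<le> y" unfolding y_def by simp
  have "(\<lambda>t. u1 t + c * ln t) y \<le> (\<lambda>t. u1 t + c * ln t) x0"
  proof (rule DERIV_nonpos_imp_nonincreasing[OF xy])
    fix t assume t: "x0 \<le> t" "t \<le> y"
    hence tp: "t > 0" using x0 by simp
    have "u2 t + c / t \<le> 0" using h[OF t(1)] eq[OF tp] by simp
    thus "\<exists>z. DERIV (\<lambda>t. u1 t + c * ln t) t :> z \<and> z \<le> 0"
      using tp by (intro exI[of _ "u2 t + c * (1 / t)"]) (auto intro!: derivative_eq_intros d2)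
  qed
  hence U: "u1 y \<le> u1 x0 + c * ln x0 - c * ln y" by simp
  have "ln y \<ge> (u1 x0 + c * ln x0) / c + 1"
  proof -
    have "exp ((u1 x0 + c * ln x0) / c + 1) \<le> y" unfolding y_def by simp
    hence "ln (exp ((u1 x0 + c * ln x0) / c + 1)) \<le> ln y" using xy x0 by (subst ln_le_cancel_iff) auto
    thus ?thesis by simp
  qed
  hence "c * ln y \<ge> c * ((u1 x0 + c * ln x0) / c + 1)" using c by (intro mult_left_mono) auto
  moreover have "c * ((u1 x0 + c * ln x0) / c + 1) = u1 x0 + c * ln x0 + c" using c by (simp add: distrib_left del: times_divide_eq_right) (metis c less_irrefl nonzero_mult_div_cancel_left times_divide_eq_right)
  ultimately have "c * ln y \<ge> u1 x0 + c * ln x0 + c" by linarith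
  hence "u1 y \<le> - c" using U by simp
  moreover have "u1 y > 0" using u1_pos xy x0 by simp
  ultimately show False using c by simp
qed

lemma DIV': assumes a: "a > 0" and q: "\<sigma> + q \<ge> -1" and h: "\<And>x. x \<ge> 1 \<Longrightarrow> a * x powr q \<le> upow (u x) p"
  shows False
proof (rule DIV[of a 1])
  fix x :: real assume x: "x \<ge> 1"
  have "a / x = a * x powr (-1)" using x by (simp add: powr_minus divide_inverse)
  also have "\<dots> \<le> a * x powr (\<sigma> + q)" using x q a by (intro mult_left_mono powr_mono) auto
  also have "\<dots> = x powr \<sigma> * (a * x powr q)" using x by (simp add: powr_add)
  also have "\<dots> \<le> x powr \<sigma> * upow (u x) p" using h[OF x] by (intro mult_left_mono) auto
  finally show "a / x \<le> x powr \<sigma> * upow (u x) p" .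
qed (use a in auto)

lemma TAIL: assumes p: "p > 0" and k: "k > 0" and sk: "\<sigma> = -1 - k" and x: "x > 0"
  shows "u1 x \<ge> u x powr p * x powr (-k) / k"
proof (rule ccontr)
  define A where "A = u x powr p"
  have A: "A > 0" unfolding A_def using u_pos[OF x] by simp
  assume "\<not> ?thesis"
  hence d: "A * x powr (-k) / k - u1 x > 0" unfolding A_def by simp
  define d where "d = A * x powr (-k) / k - u1 x"
  define y where "y = max x ((d * k / A) powr (-1/k))"
  have xy: "x \<le> y" unfolding y_def by simp
  have "(\<lambda>t. u1 t - A * t powr (-k) / k) y \<le> (\<lambda>t. u1 t - A * t powr (-k) / k) x"
  proof (rule DERIV_nonpos_imp_nonincreasing[OF xy])
    fix t assume t: "x \<le> t" "t \<le> y"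
    hence tp: "t > 0" using x by simp
    have "u x powr p \<le> u t powr p" using u_mono[OF x t(1)] u_pos[OF x] p by (intro powr_mono2) auto
    hence "t powr \<sigma> * A \<le> t powr \<sigma> * u t powr p" unfolding A_def by (intro mult_left_mono) auto
    moreover have "u2 t = - (t powr \<sigma> * u t powr p)" using eq[OF tp] p by (simp add: upow_def)
    moreover have "t powr (-k - 1) = t powr \<sigma>"
    proof -
      have "-k-1 = \<sigma>" using sk by simp
      thus ?thesis by simp
    qed
    ultimately have "u2 t - A * ((-k) * t powr (-k - 1)) / k \<le> 0" using k by (simp add: algebra_simps)
    thus "\<exists>z. DERIV (\<lambda>t. u1 t - A * t powr (-k) / k) t :> z \<and> z \<le> 0"
      using tp by (intro exI[of _ "u2 t - A * ((-k) * t powr (-k - 1)) / k"])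
         (auto intro!: derivative_eq_intros d2 has_real_derivative_powr)
  qed
  hence H: "u1 y - A * y powr (-k) / k \<le> u1 x - A * x powr (-k) / k" by simp
  have "y powr (-k) \<le> ((d * k / A) powr (-1/k)) powr (-k)"
    using k d A unfolding y_def d_def by (intro powr_mono2') auto
  also have "\<dots> = d * k / A" using k d A unfolding d_def by (simp add: powr_powr)
  finally have "A * y powr (-k) / k \<le> d" using A k by (simp add: field_simps)
  moreover have "u1 y > 0" using u1_pos x xy by simp
  ultimately show False using H unfolding d_def by simp
qed

lemma star: assumes p: "p > 0" and k: "k > 0" and sk: "\<sigma> = -1 - k" and x: "x > 0"
  shows "u x powr p * x powr (\<sigma> + 2) / k < u x"
proof -
  have e: "\<sigma> + 2 = 1 + (-k)" using sk by simp
  have "x powr (\<sigma>+2) = x * x powr (-k)" using x by (simp only: e powr_add) simp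
  hence "u x powr p * x powr (\<sigma> + 2) / k = x * (u x powr p * x powr (-k) / k)"
    by simp
  also have "\<dots> \<le> x * u1 x" using TAIL[OF p k sk x] x by (intro mult_left_mono) auto
  also have "\<dots> < u x" using key[OF x] .
  finally show ?thesis .
qed

lemma caseA: assumes s: "\<sigma> \<ge> -2" and ps: "p \<ge> -1 - \<sigma>" shows False
proof -
  consider (a) "p < 0" | (b) "p = 0" | (c) "p > 0" "\<sigma> \<ge> -1" | (d) "p > 0" "\<sigma> < -1" by linarith
  then show False
  proof cases
    case a
    define K where "K = u 1 + u1 1"
    have K: "K > 0" using u_pos[of 1] u1_pos[of 1] unfolding K_def by simp
    show False
    proof (rule DIV'[of "K powr p" p])
      fix x :: real assume x: "x \<ge> 1"
      have "u x \<le> u 1 + u1 1 * (x - 1)" using upper[of 1 x] x by simp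
      also have "\<dots> \<le> u 1 * x + u1 1 * x" using u_pos[of 1] u1_pos[of 1] x
        by (intro add_mono mult_left_mono) (auto simp: mult_le_cancel_left1)
      finally have "u x \<le> K * x" unfolding K_def by (simp add: algebra_simps)
      hence "(K * x) powr p \<le> u x powr p" using a u_pos[of x] x by (intro powr_mono2') auto
      thus "K powr p * x powr p \<le> upow (u x) p" using a K x by (simp add: upow_def powr_mult)
    qed (use K ps in auto)
  next
    case b
    show False by (rule DIV'[of 1 0]) (use b ps in \<open>auto simp: upow_def\<close>)
  next
    case c
    show False
    proof (rule DIV'[of "u 1 powr p" 0])
      fix x :: real assume x: "x \<ge> 1"
      have "u 1 powr p \<le> u x powr p" using u_mono[of 1 x] u_pos[of 1] x c by (intro powr_mono2) auto
      thus "u 1 powr p * x powr 0 \<le> upow (u x) p" using c x by (simp add: upow_def)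
    qed (use c u_pos[of 1] in auto)
  next
    case d
    define k where "k = -1 - \<sigma>"
    have k: "k > 0" "\<sigma> = -1 - k" "k \<le> 1" using d s unfolding k_def by auto
    consider (d1) "p < 1" | (d2) "p \<ge> 1" "\<sigma> > -2" | (d3) "p \<ge> 1" "\<sigma> = -2" using s by linarith
    then show False
    proof cases
      case d1
      define a where "a = k powr (-1/(1-p))"
      have a: "a > 0" unfolding a_def using k by simp
      have lin: "a * x \<le> u x" if x: "x \<ge> 1" for x
      proof (rule ccontr)
        assume "\<not> ?thesis"
        hence lt: "u x < a * x" by simp
        have ux: "u x > 0" using u_pos x by simp
        have "u x powr (1-p) < (a * x) powr (1-p)" using lt ux d1 by (intro powr_less_mono2) auto
        also have "\<dots> = a powr (1-p) * x powr (1-p)" using a x by (simp add: powr_mult)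
        also have "a powr (1-p) = 1 / k"
        proof -
          have "-1/(1-p)*(1-p) = -1" using d1 by simp
          hence "a powr (1-p) = k powr (-1)" unfolding a_def powr_powr by simp
          thus ?thesis using k by (simp add: powr_minus divide_inverse)
        qed
        also have "x powr (1-p) \<le> x powr (\<sigma> + 2)" using x ps by (intro powr_mono) auto
        hence "1 / k * x powr (1-p) \<le> 1 / k * x powr (\<sigma> + 2)" using k by (intro mult_left_mono) auto
        finally have A: "u x powr (1-p) < x powr (\<sigma> + 2) / k" by simp
        have "u x powr p * x powr (\<sigma> + 2) / k < u x" using star[OF d(1) k(1,2)] x by simp
        hence "x powr (\<sigma> + 2) / k < u x / u x powr p" using ux by (simp add: field_simps)
        also have "u x / u x powr p = u x powr (1-p)" using ux by (simp add: powr_diff)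
        finally show False using A by simp
      qed
      show False
      proof (rule DIV'[of "a powr p" p])
        fix x :: real assume x: "x \<ge> 1"
        have "(a * x) powr p \<le> u x powr p" using lin[OF x] a x d by (intro powr_mono2) auto
        thus "a powr p * x powr p \<le> upow (u x) p" using d a x by (simp add: upow_def powr_mult)
      qed (use a ps in auto)
    next
      case d2
      define c where "c = u 1"
      have c: "c > 0" using u_pos[of 1] c_def by simp
      define x where "x = max 1 ((k / c powr (p-1)) powr (1/(\<sigma>+2)))"
      have x: "x \<ge> 1" unfolding x_def by simp
      have ux: "u x > 0" using u_pos x by simp
      have "k / c powr (p-1) = ((k / c powr (p-1)) powr (1/(\<sigma>+2))) powr (\<sigma>+2)"
        using d2 k c by (simp add: powr_powr)
      also have "\<dots> \<le> x powr (\<sigma>+2)" unfolding x_def using d2 k c by (intro powr_mono2) auto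
      finally have "k \<le> c powr (p-1) * x powr (\<sigma>+2)" using c by (simp add: field_simps)
      also have "c powr (p-1) \<le> u x powr (p-1)" unfolding c_def using u_mono[of 1 x] x c_def c d2
        by (intro powr_mono2) auto
      hence "c powr (p-1) * x powr (\<sigma>+2) \<le> u x powr (p-1) * x powr (\<sigma>+2)" by (intro mult_right_mono) auto
      also have "u x powr (p-1) * x powr (\<sigma>+2) = (u x powr p * x powr (\<sigma> + 2) / k) * k / u x"
        using ux k by (simp add: powr_diff)
      also have "\<dots> < u x * k / u x" using star[OF d(1) k(1,2)] x k ux by (intro divide_strict_right_mono mult_strict_right_mono) auto
      finally show False using ux by simp
    next
      case d3
      have k1: "k = 1" using d3 k_def by simp
      have lt1: "u x powr p < u x" if "x > 0" for x
        using star[OF d(1) k(1,2) that] d3 k1 that by simp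
      show False
      proof (cases "p = 1")
        case True thus False using lt1[of 1] u_pos[of 1] by simp
      next
        case False
        hence p1: "p > 1" using d3 by simp
        have less1: "u x < 1" if x: "x > 0" for x
        proof (rule ccontr)
          assume "\<not> ?thesis"
          hence "u x powr 1 \<le> u x powr p" using p1 by (intro powr_mono) auto
          thus False using lt1[OF x] u_pos[OF x] by simp
        qed
        define c where "c = u 1"
        have c: "c > 0" using u_pos[of 1] c_def by simp
        define y where "y = exp (1 / c powr p)"
        have y: "y \<ge> 1" unfolding y_def using c by simp
        have "(\<lambda>t. u t - c powr p * ln t) 1 \<le> (\<lambda>t. u t - c powr p * ln t) y"
        proof (rule DERIV_nonneg_imp_nondecreasing[OF y])
          fix t assume t: "1 \<le> t" "t \<le> y"
          hence tp: "t > 0" by simp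
          have "c powr p \<le> u t powr p" unfolding c_def using u_mono[of 1 t] t u_pos[of 1] d
            by (intro powr_mono2) auto
          hence "c powr p * t powr (-1) \<le> u t powr p * t powr (\<sigma> + 1)" using d3 tp by (simp add: mult_right_mono divide_right_mono)
          also have "\<dots> \<le> u1 t" using TAIL[OF d(1) k(1,2) tp] k1 d3 by simp
          finally have "u1 t - c powr p * (1 / t) \<ge> 0" using tp by (simp add: powr_minus divide_inverse)
          thus "\<exists>z. DERIV (\<lambda>t. u t - c powr p * ln t) t :> z \<and> z \<ge> 0"
            using tp by (intro exI[of _ "u1 t - c powr p * (1 / t)"]) (auto intro!: derivative_eq_intros d1)
        qed
        hence "u y \<ge> c + 1" unfolding y_def c_def using c c_def by simp
        thus False using less1[of y] y c by simp
      qed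
    qed
  qed
qed

lemma inv_deriv: "x > 0 \<Longrightarrow> ((\<lambda>x. 1 / x) has_real_derivative (- (1 / x^2))) (at x)"
  by (auto intro!: derivative_eq_intros simp: power2_eq_square)

lemma kelvin: "wsol p (-3-\<sigma>-p) (\<lambda>x. x * u (1/x)) (\<lambda>x. u (1/x) - u1 (1/x) / x) (\<lambda>x. u2 (1/x) / x^3)"
proof
  fix x :: real assume x: "x > 0"
  have c1: "((\<lambda>x. u (1/x)) has_real_derivative u1 (1/x) * (- (1 / x^2))) (at x)"
    using DERIV_chain2[OF d1 inv_deriv, of x] x by simp
  have c2: "((\<lambda>x. u1 (1/x)) has_real_derivative u2 (1/x) * (- (1 / x^2))) (at x)"
    using DERIV_chain2[OF d2 inv_deriv, of x] x by simp
  show "((\<lambda>x. x * u (1/x)) has_real_derivative u (1/x) - u1 (1/x) / x) (at x)"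
    using DERIV_mult[OF DERIV_ident c1] x by (simp add: power2_eq_square field_simps)
  show "((\<lambda>x. u (1/x) - u1 (1/x) / x) has_real_derivative u2 (1/x) / x^3) (at x)"
  proof -
    have "((\<lambda>x. u (1/x) - u1 (1/x) / x) has_real_derivative
       u1 (1/x) * (- (1 / x^2)) - ((u2 (1/x) * (- (1 / x^2))) * x - u1 (1/x) * 1) / (x * x)) (at x)"
      using x by (intro DERIV_diff c1 DERIV_divide c2 DERIV_ident) auto
    moreover have "u1 (1/x) * (- (1 / x^2)) - ((u2 (1/x) * (- (1 / x^2))) * x - u1 (1/x) * 1) / (x * x)
       = u2 (1/x) / x^3" using x by (simp add: power2_eq_square power3_eq_cube field_simps)
    ultimately show ?thesis by simp
  qed
  have ux: "u (1/x) > 0" using u_pos x by simp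
  have e1: "(1/x) powr \<sigma> / x^3 = x powr (-3-\<sigma>)"
  proof -
    have "(1/x) powr \<sigma> = x powr (-\<sigma>)" using x by (simp add: powr_divide powr_minus divide_inverse inverse_powr)
    moreover have "x^3 = x powr 3" using x by (simp add: powr_realpow)
    ultimately have "(1/x) powr \<sigma> / x^3 = x powr (-\<sigma>) / x powr 3" by simp
    also have "\<dots> = x powr (-\<sigma> - 3)" by (simp add: powr_diff)
    also have "-\<sigma> - 3 = -3 - \<sigma>" by simp
    finally show ?thesis .
  qed
  show "u2 (1/x) / x^3 = - (x powr (-3-\<sigma>-p) * upow (x * u (1/x)) p)"
  proof (cases "p = 0")
    case True thus ?thesis using eq[of "1/x"] x e1 by (simp add: upow_def)
  next
    case False
    have "x powr (-3-\<sigma>-p) * (x * u (1/x)) powr p = x powr (-3-\<sigma>-p) * x powr p * u (1/x) powr p"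
      using x ux by (simp add: powr_mult)
    also have "x powr (-3-\<sigma>-p) * x powr p = x powr (-3-\<sigma>)" by (simp add: powr_add[symmetric])
    finally have f: "x powr (-3-\<sigma>-p) * (x * u (1/x)) powr p = x powr (-3-\<sigma>) * u (1/x) powr p" .
    have "u2 (1/x) / x^3 = - (((1/x) powr \<sigma> / x^3) * u (1/x) powr p)"
      using eq[of "1/x"] x False by (simp add: upow_def)
    thus ?thesis using f e1 False by (simp add: upow_def)
  qed
  show "x * u (1/x) \<ge> 0" using x ux by simp
next
  show "\<exists>x>0. x * u (1/x) \<noteq> 0" using u_pos[of 1] by (intro exI[of _ 1]) auto
qed

end

lemma necessity:
  assumes "is_solution p \<sigma> u"
  shows "(\<sigma> < -2 \<and> p > -1 - \<sigma>) \<or> (\<sigma> > -2 \<and> p < -1 - \<sigma>)"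
proof (rule ccontr)
  assume nc: "\<not> ?thesis"
  have W: "wsol p \<sigma> u (deriv u) (deriv (deriv u))"
  proof
    fix x :: real assume x: "x > 0"
    show "(u has_real_derivative deriv u x) (at x)"
      using assms x unfolding is_solution_def C2_on_def by (simp add: DERIV_deriv_iff_real_differentiable)
    show "(deriv u has_real_derivative deriv (deriv u) x) (at x)"
      using assms x unfolding is_solution_def C2_on_def by (simp add: DERIV_deriv_iff_real_differentiable)
    have "- deriv (deriv u) x = x powr \<sigma> * upow (u x) p"
      using assms x unfolding is_solution_def by blast
    thus "deriv (deriv u) x = - (x powr \<sigma> * upow (u x) p)" by linarith
    show "u x \<ge> 0" using assms x unfolding is_solution_def by simp
  next
    show "\<exists>x>0. u x \<noteq> 0" using assms unfolding is_solution_def by simp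
  qed
  consider "\<sigma> \<ge> -2" "p \<ge> -1 - \<sigma>" | "\<sigma> \<le> -2" "p \<le> -1 - \<sigma>" using nc by linarith
  then show False
  proof cases
    case 1 thus False using wsol.caseA[OF W] by simp
  next
    case 2
    show False using wsol.caseA[OF wsol.kelvin[OF W]] 2 by simp
  qed
qed

lemma sufficiency:
  assumes h: "(\<sigma> < -2 \<and> p > -1 - \<sigma>) \<or> (\<sigma> > -2 \<and> p < -1 - \<sigma>)"
  shows "\<exists>u. is_solution p \<sigma> u"
proof -
  define a where "a = (\<sigma> + 2) / (1 - p)"
  have a: "0 < a" "a < 1"
    using h unfolding a_def by (auto simp: zero_less_divide_iff divide_less_eq)
  have p1: "p \<noteq> 1" using h by auto
  define b where "b = a * (1 - a)"
  have b: "b > 0" unfolding b_def using a by simp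
  define c where "c = b powr (1 / (p - 1))"
  have c: "c > 0" unfolding c_def using b by simp
  define u where "u = (\<lambda>x::real. c * x powr a)"
  define u1 where "u1 = (\<lambda>x::real. c * (a * x powr (a - 1)))"
  define u2 where "u2 = (\<lambda>x::real. c * a * ((a - 1) * x powr (a - 1 - 1)))"
  have D1: "(u has_real_derivative u1 x) (at x)" if "x > 0" for x
    unfolding u_def u1_def using that by (intro DERIV_cmult has_real_derivative_powr)
  have D2: "(u1 has_real_derivative u2 x) (at x)" if "x > 0" for x
  proof -
    have "((\<lambda>x. c * a * x powr (a - 1)) has_real_derivative u2 x) (at x)"
      unfolding u2_def using that by (intro DERIV_cmult has_real_derivative_powr)
    thus ?thesis unfolding u1_def by (simp add: mult.assoc)
  qed
  have du: "deriv u x = u1 x" if "x > 0" for x using D1[OF that] by (rule DERIV_imp_deriv)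
  have D2': "(deriv u has_real_derivative u2 x) (at x)" if "x > 0" for x
    by (rule has_field_derivative_transform_within_open[OF D2[OF that], of "{0<..}"]) (use that du in auto)
  have ddu: "deriv (deriv u) x = u2 x" if "x > 0" for x using D2'[OF that] by (rule DERIV_imp_deriv)
  have cont: "continuous_on {0<..} u2" unfolding u2_def by (auto intro!: continuous_intros)
  have "is_solution p \<sigma> u"
    unfolding is_solution_def C2_on_def
  proof (intro conjI ballI allI impI)
    fix x :: real assume "x \<in> {0<..}"
    hence x: "x > 0" by simp
    show "u differentiable at x" using D1[OF x] real_differentiable_def by blast
    show "deriv u differentiable at x" using D2'[OF x] real_differentiable_def by blast
  next
    show "continuous_on {0<..} (deriv (deriv u))"
      using cont by (rule continuous_on_cong[THEN iffD1, rotated 2]) (auto simp: ddu)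
  next
    fix x :: real assume x: "x > 0"
    show "u x \<ge> 0" "u x > 0" unfolding u_def using c x by auto
  next
    show "\<exists>x>0. u x \<noteq> 0" unfolding u_def using c by (intro exI[of _ 1]) auto
  next
    fix x :: real assume x: "x > 0"
    have up: "upow (u x) p = c powr p * x powr (a * p)"
      unfolding upow_def u_def using c x by (simp add: powr_mult powr_powr)
    have "c powr p = c * b"
    proof -
      have "c powr (p - 1) = b" unfolding c_def using b p1 by (simp add: powr_powr)
      moreover have "c powr p = c powr (p - 1) * c powr 1" by (simp only: powr_add[symmetric]) simp
      ultimately show ?thesis using c by simp
    qed
    moreover have "x powr \<sigma> * x powr (a * p) = x powr (a - 1 - 1)"
    proof -
      have "a * (1 - p) = \<sigma> + 2" unfolding a_def using p1 by simp
      hence "\<sigma> + a * p = a - 1 - 1" by (simp add: algebra_simps)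
      thus ?thesis by (simp add: powr_add[symmetric])
    qed
    ultimately have "x powr \<sigma> * upow (u x) p = c * b * x powr (a - 1 - 1)"
      using up by (simp add: algebra_simps)
    thus "- deriv (deriv u) x = x powr \<sigma> * upow (u x) p"
      using ddu[OF x] unfolding u2_def b_def by (simp add: algebra_simps)
  qed
  thus ?thesis by blast
qed

theorem theorem1p3:
  fixes p \<sigma> :: real
  shows "(\<exists>u. is_solution p \<sigma> u) \<longleftrightarrow>
           ((\<sigma> < -2 \<and> p > -1 - \<sigma>) \<or> (\<sigma> > -2 \<and> p < -1 - \<sigma>))"
  using necessity sufficiency by blast

end
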